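(* Let $G$ be a finite group of order $mn$, let $H$ be a normal subgroup of $G$ of order $n$, and suppose there exists an $(m,n,m-1,\frac{m-2}{n})$-relative difference set $R$ in $G$ relative to $H$. Then there exists a family of subsets of $G$ which partitions $G\setminus H$ and which is both an $(mn,n,m-1,m-2,0)$-DPDF and an $(mn,n,m-1,(m-2)(n-1),(m-1)n)$-EPDF in $G$.
   Context: Groups are written multiplicatively with identity $e$; $G^*=G\setminus\{e\}$. For $D\subseteq G$, $\Delta(D)$ is the multiset $\{xy^{-1}: x,y\in D, x\ne y\}$; for $D_1,D_2\subseteq G$, $\Delta(D_1,D_2)$ is the multiset $\{xy^{-1}:x\in D_1,y\in D_2\}$. For a family $A=\{A_1,\dots,A_s\}$ of pairwise disjoint subsets, ${\rm Int}(A)=\bigcup_i\Delta(A_i)$ and ${\rm Ext}(A)=\bigcup_{i\ne j}\Delta(A_i,A_j)$ (multiset unions). For $|G|=v$, a $(v,s,k,\lambda,\mu)$-DPDF is a family of $s$ pairwise disjoint $k$-subsets of $G^*$ with union $S$ such that ${\rm Int}(A)$ contains each element of $S$ exactly $\lambda$ times and each element of $G\setminus(S\cup\{e\})$ exactly $\mu$ times; a $(v,s,k,\lambda,\mu)$-EPDF is defined the same way using ${\rm Ext}(A)$. If $G$ has order $mn$ and $H$ is a normal subgroup of order $n$, a $k$-subset $R\subseteq G$ is an $(m,n,k,\lambda)$-relative difference set (RDS) relative to $H$ if $\Delta(R)$ contains each element of $G\setminus H$ exactly $\lambda$ times and no element of $H\setminus\{e\}$. A family partitions a set $X$ if its members are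 pairwise disjoint with union $X$. *)

theory Defs
  imports Complex_Main "HOL-Algebra.Coset" "HOL-Library.Multiset"
begin

definition Delta :: "('a, 'b) monoid_scheme \<Rightarrow> 'a set \<Rightarrow> 'a multiset" where
  "Delta G D = image_mset (\<lambda>(x, y). x \<otimes>\<^bsub>G\<^esub> inv\<^bsub>G\<^esub> y)
      (mset_set {(x, y). x \<in> D \<and> y \<in> D \<and> x \<noteq> y})"

definition Delta2 :: "('a, 'b) monoid_scheme \<Rightarrow> 'a set \<Rightarrow> 'a set \<Rightarrow> 'a multiset" where
  "Delta2 G D1 D2 = image_mset (\<lambda>(x, y). x \<otimes>\<^bsub>G\<^esub> inv\<^bsub>G\<^esub> y) (mset_set (D1 \<times> D2))"

text \<open>A family of s sets is given as an indexed family A 0, ..., A (s-1).\<close>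
definition IntD :: "('a, 'b) monoid_scheme \<Rightarrow> nat \<Rightarrow> (nat \<Rightarrow> 'a set) \<Rightarrow> 'a multiset" where
  "IntD G s A = (\<Sum>i<s. Delta G (A i))"

definition ExtD :: "('a, 'b) monoid_scheme \<Rightarrow> nat \<Rightarrow> (nat \<Rightarrow> 'a set) \<Rightarrow> 'a multiset" where
  "ExtD G s A = (\<Sum>i<s. \<Sum>j\<in>{..<s} - {i}. Delta2 G (A i) (A j))"

definition pairwise_disjoint_fam :: "nat \<Rightarrow> (nat \<Rightarrow> 'a set) \<Rightarrow> bool" where
  "pairwise_disjoint_fam s A \<longleftrightarrow> (\<forall>i<s. \<forall>j<s. i \<noteq> j \<longrightarrow> A i \<inter> A j = {})"

definition partitions_fam :: "nat \<Rightarrow> (nat \<Rightarrow> 'a set) \<Rightarrow> 'a set \<Rightarrow> bool" where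
  "partitions_fam s A X \<longleftrightarrow> pairwise_disjoint_fam s A \<and> (\<Union>i<s. A i) = X"

definition PDF_gen :: "('a, 'b) monoid_scheme \<Rightarrow> (nat \<Rightarrow> (nat \<Rightarrow> 'a set) \<Rightarrow> 'a multiset)
    \<Rightarrow> nat \<Rightarrow> nat \<Rightarrow> nat \<Rightarrow> nat \<Rightarrow> nat \<Rightarrow> (nat \<Rightarrow> 'a set) \<Rightarrow> bool" where
  "PDF_gen G Op v s k lam mu A \<longleftrightarrow>
     card (carrier G) = v \<and>
     (\<forall>i<s. A i \<subseteq> carrier G - {\<one>\<^bsub>G\<^esub>} \<and> card (A i) = k) \<and>
     pairwise_disjoint_fam s A \<and>
     (\<forall>x\<in>(\<Union>i<s. A i). count (Op s A) x = lam) \<and>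
     (\<forall>x\<in>carrier G - (\<Union>i<s. A i) - {\<one>\<^bsub>G\<^esub>}. count (Op s A) x = mu)"

definition DPDF :: "('a, 'b) monoid_scheme \<Rightarrow> nat \<Rightarrow> nat \<Rightarrow> nat \<Rightarrow> nat \<Rightarrow> nat \<Rightarrow> (nat \<Rightarrow> 'a set) \<Rightarrow> bool" where
  "DPDF G v s k lam mu A \<longleftrightarrow> PDF_gen G (IntD G) v s k lam mu A"

definition EPDF :: "('a, 'b) monoid_scheme \<Rightarrow> nat \<Rightarrow> nat \<Rightarrow> nat \<Rightarrow> nat \<Rightarrow> nat \<Rightarrow> (nat \<Rightarrow> 'a set) \<Rightarrow> bool" where
  "EPDF G v s k lam mu A \<longleftrightarrow> PDF_gen G (ExtD G) v s k lam mu A"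

definition RDS :: "('a, 'b) monoid_scheme \<Rightarrow> 'a set \<Rightarrow> nat \<Rightarrow> nat \<Rightarrow> nat \<Rightarrow> nat \<Rightarrow> 'a set \<Rightarrow> bool" where
  "RDS G H m n k lam R \<longleftrightarrow>
     card (carrier G) = m * n \<and> H \<lhd> G \<and> card H = n \<and>
     R \<subseteq> carrier G \<and> card R = k \<and>
     (\<forall>x\<in>carrier G - H. count (Delta G R) x = lam) \<and>
     (\<forall>x\<in>H - {\<one>\<^bsub>G\<^esub>}. count (Delta G R) x = 0)"

end

theory Submission imports Defs begin

lemma count_img_mset_set:
  assumes "finite S"
  shows "count (image_mset f (mset_set S)) x = card {s\<in>S. f s = x}"
proof -
  have "count (image_mset f (mset_set S)) x = (\<Sum>y\<in>f -` {x} \<inter> S. 1)"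
    using assms by (simp add: count_image_mset)
  also have "\<dots> = card {s\<in>S. f s = x}"
    by (simp add: Int_commute vimage_def Collect_conj_eq)
  finally show ?thesis .
qed

lemma Delta2_UN1:
  assumes "finite I" "\<forall>i\<in>I. finite (A i)" "finite D"
    "\<forall>i\<in>I. \<forall>j\<in>I. i \<noteq> j \<longrightarrow> A i \<inter> A j = {}"
  shows "Delta2 G (\<Union>i\<in>I. A i) D = (\<Sum>i\<in>I. Delta2 G (A i) D)"
  using assms
proof (induction I rule: finite_induct)
  case empty
  then show ?case by (simp add: Delta2_def)
next
  case (insert a I)
  have "(\<Union>i\<in>insert a I. A i) \<times> D = (A a \<times> D) \<union> ((\<Union>i\<in>I. A i) \<times> D)" by blast
  moreover have "(A a \<times> D) \<inter> ((\<Union>i\<in>I. A i) \<times> D) = {}"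
  proof -
    have "A a \<inter> A i = {}" if "i \<in> I" for i using insert.prems(3) insert.hyps(2) that by auto
    then show ?thesis by blast
  qed
  ultimately have "mset_set ((\<Union>i\<in>insert a I. A i) \<times> D) = mset_set (A a \<times> D) + mset_set ((\<Union>i\<in>I. A i) \<times> D)"
    using insert by (simp add: mset_set_Union)
  then have "Delta2 G (\<Union>i\<in>insert a I. A i) D = Delta2 G (A a) D + Delta2 G (\<Union>i\<in>I. A i) D"
    by (simp add: Delta2_def)
  then show ?case using insert by simp
qed

lemma Delta2_UN2:
  assumes "finite I" "\<forall>i\<in>I. finite (A i)" "finite D"
    "\<forall>i\<in>I. \<forall>j\<in>I. i \<noteq> j \<longrightarrow> A i \<inter> A j = {}"
  shows "Delta2 G D (\<Union>i\<in>I. A i) = (\<Sum>i\<in>I. Delta2 G D (A i))"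
  using assms
proof (induction I rule: finite_induct)
  case empty
  then show ?case by (simp add: Delta2_def)
next
  case (insert a I)
  have "D \<times> (\<Union>i\<in>insert a I. A i) = (D \<times> A a) \<union> (D \<times> (\<Union>i\<in>I. A i))" by blast
  moreover have "(D \<times> A a) \<inter> (D \<times> (\<Union>i\<in>I. A i)) = {}"
  proof -
    have "A a \<inter> A i = {}" if "i \<in> I" for i using insert.prems(3) insert.hyps(2) that by auto
    then show ?thesis by blast
  qed
  ultimately have "mset_set (D \<times> (\<Union>i\<in>insert a I. A i)) = mset_set (D \<times> A a) + mset_set (D \<times> (\<Union>i\<in>I. A i))"
    using insert by (simp add: mset_set_Union)
  then have "Delta2 G D (\<Union>i\<in>insert a I. A i) = Delta2 G D (A a) + Delta2 G D (\<Union>i\<in>I. A i)"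
    by (simp add: Delta2_def)
  then show ?case using insert by simp
qed

lemma count_Delta2:
  assumes "finite X" "finite Y"
  shows "count (Delta2 G X Y) g = card {p \<in> X \<times> Y. fst p \<otimes>\<^bsub>G\<^esub> inv\<^bsub>G\<^esub> snd p = g}"
  unfolding Delta2_def using assms
  by (simp add: count_img_mset_set case_prod_beta)

lemma count_Delta:
  assumes "finite X"
  shows "count (Delta G X) g = card {p \<in> {(x, y). x \<in> X \<and> y \<in> X \<and> x \<noteq> y}. fst p \<otimes>\<^bsub>G\<^esub> inv\<^bsub>G\<^esub> snd p = g}"
proof -
  have "finite {(x, y). x \<in> X \<and> y \<in> X \<and> x \<noteq> y}"
    by (rule finite_subset[of _ "X \<times> X"]) (use assms in auto)
  then show ?thesis unfolding Delta_def
    by (simp add: count_img_mset_set case_prod_beta)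
qed

context group begin

lemma count_Delta_eq_Delta2:
  assumes "finite X" "X \<subseteq> carrier G" "g \<noteq> \<one>"
  shows "count (Delta G X) g = count (Delta2 G X X) g"
proof -
  have "{p \<in> {(x, y). x \<in> X \<and> y \<in> X \<and> x \<noteq> y}. fst p \<otimes> inv snd p = g}
      = {p \<in> X \<times> X. fst p \<otimes> inv snd p = g}"
    using assms by (auto simp: subsetD)
  then show ?thesis using assms by (simp add: count_Delta count_Delta2)
qed

lemma Delta_rtrans:
  assumes "X \<subseteq> carrier G" "c \<in> carrier G"
  shows "Delta G ((\<lambda>x. x \<otimes> c) ` X) = Delta G X"
proof -
  let ?P = "\<lambda>X. {(x, y). x \<in> X \<and> y \<in> X \<and> x \<noteq> y}"
  let ?t = "\<lambda>(x, y). (x \<otimes> c, y \<otimes> c)"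
  have inj: "inj_on ?t (?P X)" using assms by (auto simp: inj_on_def subsetD)
  have img: "?P ((\<lambda>x. x \<otimes> c) ` X) = ?t ` ?P X"
  proof
    show "?P ((\<lambda>x. x \<otimes> c) ` X) \<subseteq> ?t ` ?P X" by auto
    show "?t ` ?P X \<subseteq> ?P ((\<lambda>x. x \<otimes> c) ` X)" using assms by (auto simp: subsetD)
  qed
  have "Delta G ((\<lambda>x. x \<otimes> c) ` X) = image_mset (\<lambda>(x, y). x \<otimes> inv y) (image_mset ?t (mset_set (?P X)))"
    unfolding Delta_def img image_mset_mset_set[OF inj] ..
  also have "\<dots> = image_mset ((\<lambda>(x, y). x \<otimes> inv y) \<circ> ?t) (mset_set (?P X))"
    by (simp add: multiset.map_comp)
  also have "\<dots> = image_mset (\<lambda>(x, y). x \<otimes> inv y) (mset_set (?P X))"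
  proof (rule image_mset_cong)
    fix p assume "p \<in># mset_set (?P X)"
    then obtain x y where p: "p = (x, y)" "x \<in> X" "y \<in> X"
      by (cases "finite (?P X)") auto
    then have xy: "x \<in> carrier G" "y \<in> carrier G" using assms by auto
    have "(x \<otimes> c) \<otimes> inv (y \<otimes> c) = x \<otimes> (c \<otimes> inv c) \<otimes> inv y"
      using xy assms by (simp add: inv_mult_group m_assoc m_assoc[symmetric])
    then show "((\<lambda>(x, y). x \<otimes> inv y) \<circ> ?t) p = (\<lambda>(x, y). x \<otimes> inv y) p"
      using p xy assms by simp
  qed
  finally show ?thesis unfolding Delta_def .
qed

end


context group begin

lemma card_shift_set:
  assumes "subgroup H G" "g \<in> carrier G"
  shows "card {b \<in> carrier G. g \<otimes> b \<in> H} = card H"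
proof -
  have sub: "H \<subseteq> carrier G" using assms subgroup.subset by blast
  have "{b \<in> carrier G. g \<otimes> b \<in> H} = (\<lambda>h. inv g \<otimes> h) ` H"
  proof
    show "{b \<in> carrier G. g \<otimes> b \<in> H} \<subseteq> (\<lambda>h. inv g \<otimes> h) ` H"
    proof
      fix b assume b: "b \<in> {b \<in> carrier G. g \<otimes> b \<in> H}"
      then have "b = inv g \<otimes> (g \<otimes> b)" using assms by (simp add: m_assoc[symmetric])
      then show "b \<in> (\<lambda>h. inv g \<otimes> h) ` H" using b by blast
    qed
    show "(\<lambda>h. inv g \<otimes> h) ` H \<subseteq> {b \<in> carrier G. g \<otimes> b \<in> H}"
      using assms sub by (auto simp: m_assoc[symmetric] subsetD)
  qed
  moreover have "inj_on (\<lambda>h. inv g \<otimes> h) H"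
    using assms sub by (auto simp: inj_on_def subsetD)
  ultimately show ?thesis by (simp add: card_image)
qed

lemma count_Delta2_U:
  assumes "finite U" "U \<subseteq> carrier G" "g \<in> carrier G"
  shows "count (Delta2 G U U) g = card {b \<in> U. g \<otimes> b \<in> U}"
proof -
  have "{p \<in> U \<times> U. fst p \<otimes> inv snd p = g} = (\<lambda>b. (g \<otimes> b, b)) ` {b \<in> U. g \<otimes> b \<in> U}"
  proof
    show "{p \<in> U \<times> U. fst p \<otimes> inv snd p = g} \<subseteq> (\<lambda>b. (g \<otimes> b, b)) ` {b \<in> U. g \<otimes> b \<in> U}"
    proof
      fix p assume p: "p \<in> {p \<in> U \<times> U. fst p \<otimes> inv snd p = g}"
      then obtain a b where ab: "p = (a, b)" "a \<in> U" "b \<in> U" "a \<otimes> inv b = g" by auto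
      then have "a = g \<otimes> b" using assms by (auto simp: m_assoc subsetD)
      then show "p \<in> (\<lambda>b. (g \<otimes> b, b)) ` {b \<in> U. g \<otimes> b \<in> U}" using ab by auto
    qed
    show "(\<lambda>b. (g \<otimes> b, b)) ` {b \<in> U. g \<otimes> b \<in> U} \<subseteq> {p \<in> U \<times> U. fst p \<otimes> inv snd p = g}"
      using assms by (auto simp: m_assoc subsetD)
  qed
  moreover have "inj_on (\<lambda>b. (g \<otimes> b, b)) {b \<in> U. g \<otimes> b \<in> U}" by (auto simp: inj_on_def)
  ultimately show ?thesis using assms by (simp add: count_Delta2 card_image)
qed

end

lemma (in group) main_aux:
  fixes H :: "'a set" and R :: "'a set"
    and m n lam :: nat
  assumes "finite (carrier G)"
    and "card (carrier G) = m * n"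
    and "H \<lhd> G" and "card H = n"
    and "real lam = (real m - 2) / real n"
    and "RDS G H m n (m - 1) lam R"
  shows "\<exists>A :: nat \<Rightarrow> 'a set.
           partitions_fam n A (carrier G - H) \<and>
           DPDF G (m * n) n (m - 1) (m - 2) 0 A \<and>
           EPDF G (m * n) n (m - 1) ((m - 2) * (n - 1)) ((m - 1) * n) A"
proof -
  interpret normal H G by fact
  have subH: "subgroup H G" by (rule normal_imp_subgroup[OF assms(3)])
  have Hc: "H \<subseteq> carrier G" using subH subgroup.subset by blast
  have finH: "finite H" using Hc assms(1) finite_subset by blast
  have oneH: "\<one> \<in> H" using subH subgroup.one_closed by blast
  have "card H > 0" using finH oneH card_gt_0_iff by blast
  then have npos: "n \<ge> 1" using assms(4) by simp
  have Rc: "R \<subseteq> carrier G" and cardR: "card R = m - 1"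
    and RG: "\<And>x. x \<in> carrier G - H \<Longrightarrow> count (Delta G R) x = lam"
    and RH: "\<And>x. x \<in> H - {\<one>} \<Longrightarrow> count (Delta G R) x = 0"
    using assms(6) unfolding RDS_def by auto
  have finR: "finite R" using Rc assms(1) finite_subset by blast
  have nz: "real n \<noteq> 0" using npos by simp
  have eq: "real lam * real n = real m - 2" using assms(5) nz by simp
  have "real lam * real n \<ge> 0" by simp
  then have "real m \<ge> 2" using eq by linarith
  then have m2: "m \<ge> 2" by simp
  have "real (n * lam) = real (m - 2)" using eq m2 by (simp add: of_nat_diff mult.commute)
  then have lamn: "n * lam = m - 2" using of_nat_eq_iff by blast
  have Rsep: "x = y" if "x \<in> R" "y \<in> R" "x \<otimes> inv y \<in> H" for x y
  proof (rule ccontr)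
    assume ne: "x \<noteq> y"
    have xy: "x \<in> carrier G" "y \<in> carrier G" using that Rc by auto
    have "x = (x \<otimes> inv y) \<otimes> y" using xy by (simp add: m_assoc)
    then have "x \<otimes> inv y \<noteq> \<one>" using ne xy by auto
    then have c0: "count (Delta G R) (x \<otimes> inv y) = 0" using RH that by auto
    let ?S = "{p \<in> {(x, y). x \<in> R \<and> y \<in> R \<and> x \<noteq> y}. fst p \<otimes> inv snd p = x \<otimes> inv y}"
    have "finite ?S" by (rule finite_subset[of _ "R \<times> R"]) (use finR in auto)
    moreover have "(x, y) \<in> ?S" using that ne by auto
    ultimately have "card ?S > 0" using card_gt_0_iff by blast
    then show False using c0 count_Delta[OF finR, of G] by simp
  qed
  define T where "T = (\<Union>x\<in>R. H #> x)"
  have Himg: "H #> x = (\<lambda>h. h \<otimes> x) ` H" for x unfolding r_coset_def by auto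
  have cardT: "card T \<le> (m - 1) * n"
  proof -
    have "card T \<le> (\<Sum>x\<in>R. card (H #> x))" unfolding T_def using finR by (rule card_UN_le)
    also have "\<dots> \<le> (\<Sum>x\<in>R. n)"
    proof (rule sum_mono)
      fix x assume "x \<in> R"
      show "card (H #> x) \<le> n" unfolding Himg using card_image_le[OF finH] assms(4) by simp
    qed
    finally show ?thesis using cardR by simp
  qed
  have finT: "finite T" unfolding T_def using finR finH Himg by simp
  have "\<not> carrier G \<subseteq> T"
  proof
    assume "carrier G \<subseteq> T"
    then have "card (carrier G) \<le> card T" using card_mono[OF finT] by blast
    then have "m * n \<le> (m - 1) * n" using cardT assms(2) by linarith
    moreover have "(m - 1) * n < m * n" by (rule mult_strict_right_mono) (use m2 npos in auto)
    ultimately show False by linarith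
  qed
  then obtain g0 where g0: "g0 \<in> carrier G" "g0 \<notin> T" by blast
  have g0R: "x \<otimes> inv g0 \<notin> H" if "x \<in> R" for x
  proof
    assume a: "x \<otimes> inv g0 \<in> H"
    have xc: "x \<in> carrier G" using that Rc by auto
    have "inv (x \<otimes> inv g0) = g0 \<otimes> inv x" using xc g0 by (simp add: inv_mult_group)
    then have "g0 \<otimes> inv x \<in> H" using a subgroup.m_inv_closed[OF subH a] by simp
    then have "g0 \<in> H #> x" using subgroup.rcos_module_rev[OF subH is_group xc g0(1)] by simp
    then show False using g0 that unfolding T_def by blast
  qed
  obtain hs where hs: "bij_betw hs {0..<card H} H" using ex_bij_betw_nat_finite[OF finH] by blast
  then have hsb: "bij_betw hs {..<n} H" using assms(4) by (simp add: atLeast0LessThan)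
  have hsH: "hs i \<in> H" if "i < n" for i using hsb that bij_betwE by blast
  have hsc: "hs i \<in> carrier G" if "i < n" for i using hsH[OF that] Hc by auto
  define c where "c i = inv g0 \<otimes> hs i" for i
  have cc: "c i \<in> carrier G" if "i < n" for i using hsc[OF that] g0 c_def by simp
  define A where "A i = (\<lambda>x. x \<otimes> c i) ` R" for i
  have Asub: "A i \<subseteq> carrier G - H" if "i < n" for i
  proof
    fix z assume "z \<in> A i"
    then obtain x where x: "x \<in> R" "z = x \<otimes> c i" unfolding A_def by auto
    have xc: "x \<in> carrier G" using x Rc by auto
    have zc: "z \<in> carrier G" using x xc cc[OF that] by simp
    have "x \<otimes> inv g0 = z \<otimes> inv (hs i)"
      using x xc g0 hsc[OF that] by (simp add: c_def m_assoc)
    moreover have "z \<in> H \<Longrightarrow> z \<otimes> inv (hs i) \<in> H"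
      using subH hsH[OF that] subgroup.m_closed subgroup.m_inv_closed by metis
    ultimately show "z \<in> carrier G - H" using g0R[OF x(1)] zc by auto
  qed
  have Acard: "card (A i) = m - 1" if "i < n" for i
  proof -
    have "inj_on (\<lambda>x. x \<otimes> c i) R" using Rc cc[OF that] by (auto simp: inj_on_def subsetD)
    then show ?thesis unfolding A_def using cardR card_image by metis
  qed
  have finA: "finite (A i)" for i unfolding A_def using finR by simp
  have Adisj: "A i \<inter> A j = {}" if "i < n" "j < n" "i \<noteq> j" for i j
  proof (rule ccontr)
    assume "A i \<inter> A j \<noteq> {}"
    then obtain x y where x: "x \<in> R" and y: "y \<in> R" and e: "x \<otimes> c i = y \<otimes> c j"
      unfolding A_def by auto
    have xc: "x \<in> carrier G" using x Rc by auto
    have yc: "y \<in> carrier G" using y Rc by auto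
    have ci: "c i \<in> carrier G" and cj: "c j \<in> carrier G" using cc that by auto
    have "x \<otimes> c i \<otimes> inv (c i) = y \<otimes> c j \<otimes> inv (c i)" using e by simp
    then have "x = y \<otimes> c j \<otimes> inv (c i)"
      using xc yc ci cj by (simp add: m_assoc)
    then have "x \<otimes> inv y = y \<otimes> (c j \<otimes> inv (c i)) \<otimes> inv y"
      using xc yc ci cj by (simp add: m_assoc)
    moreover have "c j \<otimes> inv (c i) = inv g0 \<otimes> (hs j \<otimes> inv (hs i)) \<otimes> g0"
      using g0 hsc that by (simp add: c_def inv_mult_group m_assoc)
    moreover have "hs j \<otimes> inv (hs i) \<in> H"
      using hsH that subH subgroup.m_closed subgroup.m_inv_closed by metis
    then have "inv g0 \<otimes> (hs j \<otimes> inv (hs i)) \<otimes> g0 \<in> H"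
      using inv_op_closed1 g0 by blast
    ultimately have "y \<otimes> (c j \<otimes> inv (c i)) \<otimes> inv y \<in> H" using inv_op_closed2 yc by simp
    then have "x \<otimes> inv y \<in> H" using \<open>x \<otimes> inv y = y \<otimes> (c j \<otimes> inv (c i)) \<otimes> inv y\<close> by simp
    then have "x = y" using Rsep x y by blast
    then have "c i = c j" using e xc ci cj by simp
    then have "hs i = hs j" using g0 hsc that by (simp add: c_def)
    then show False using hsb that unfolding bij_betw_def inj_on_def by auto
  qed
  let ?U = "carrier G - H"
  have disjfam: "\<forall>i\<in>{..<n}. \<forall>j\<in>{..<n}. i \<noteq> j \<longrightarrow> A i \<inter> A j = {}" using Adisj by auto
  have cardU: "card ?U = m * n - n" using card_Diff_subset[OF finH Hc] assms(2,4) by simp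
  have UA: "(\<Union>i<n. A i) = ?U"
  proof (rule card_subset_eq)
    show "finite ?U" using assms(1) by simp
    show "(\<Union>i<n. A i) \<subseteq> ?U" using Asub by auto
    have "card (\<Union>i<n. A i) = (\<Sum>i<n. card (A i))"
      using card_UN_disjoint[of "{..<n}" A] disjfam finA by simp
    also have "\<dots> = n * (m - 1)" using Acard by simp
    finally show "card (\<Union>i<n. A i) = card ?U" using cardU by (simp add: algebra_simps diff_mult_distrib)
  qed
  have cntInt: "count (IntD G n A) g = n * count (Delta G R) g" for g
  proof -
    have "count (IntD G n A) g = (\<Sum>i<n. count (Delta G (A i)) g)"
      unfolding IntD_def by (simp add: count_sum)
    also have "\<dots> = (\<Sum>i<n. count (Delta G R) g)"
      using Delta_rtrans[OF Rc] cc unfolding A_def by simp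
    finally show ?thesis by simp
  qed
  have cntExt: "count (ExtD G n A) g + count (IntD G n A) g = card {b \<in> ?U. g \<otimes> b \<in> ?U}"
    if g: "g \<in> carrier G" "g \<noteq> \<one>" for g
  proof -
    have finU: "finite ?U" using assms(1) by simp
    have "Delta2 G ?U ?U = (\<Sum>i<n. Delta2 G (A i) ?U)"
      using Delta2_UN1[of "{..<n}" A ?U G] disjfam finA finU UA by simp
    also have "\<dots> = (\<Sum>i<n. \<Sum>j<n. Delta2 G (A i) (A j))"
      using Delta2_UN2[of "{..<n}" A _ G] disjfam finA UA by simp
    also have "\<dots> = (\<Sum>i<n. Delta2 G (A i) (A i) + (\<Sum>j\<in>{..<n} - {i}. Delta2 G (A i) (A j)))"
      by (rule sum.cong) (auto simp: sum.remove)
    also have "\<dots> = (\<Sum>i<n. Delta2 G (A i) (A i)) + ExtD G n A"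
      unfolding ExtD_def by (simp add: sum.distrib)
    finally have "count (Delta2 G ?U ?U) g = (\<Sum>i<n. count (Delta2 G (A i) (A i)) g) + count (ExtD G n A) g"
      by (simp add: count_sum)
    also have "(\<Sum>i<n. count (Delta2 G (A i) (A i)) g) = (\<Sum>i<n. count (Delta G (A i)) g)"
    proof (intro sum.cong refl)
      fix i assume "i \<in> {..<n}"
      then have "A i \<subseteq> carrier G" using Asub by blast
      then show "count (Delta2 G (A i) (A i)) g = count (Delta G (A i)) g"
        using count_Delta_eq_Delta2[OF finA _ g(2)] by simp
    qed
    also have "\<dots> = count (IntD G n A) g" unfolding IntD_def by (simp add: count_sum)
    finally show ?thesis using count_Delta2_U[OF finU _ g(1)] by simp
  qed
  have common: "card (carrier G) = m * n \<and>
     (\<forall>i<n. A i \<subseteq> carrier G - {\<one>} \<and> card (A i) = m - 1) \<and> pairwise_disjoint_fam n A"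
    using assms(2) Asub Acard Adisj oneH unfolding pairwise_disjoint_fam_def by blast
  have Hrest: "carrier G - (\<Union>i<n. A i) - {\<one>} = H - {\<one>}" using UA Hc by blast
  have DP: "DPDF G (m * n) n (m - 1) (m - 2) 0 A"
    unfolding DPDF_def PDF_gen_def using common
  proof (intro conjI ballI)
    fix x assume "x \<in> (\<Union>i<n. A i)"
    then show "count (IntD G n A) x = m - 2" using UA cntInt RG lamn by simp
  next
    fix x assume "x \<in> carrier G - (\<Union>i<n. A i) - {\<one>}"
    then show "count (IntD G n A) x = 0" using Hrest cntInt RH by simp
  qed simp_all
  have EP: "EPDF G (m * n) n (m - 1) ((m - 2) * (n - 1)) ((m - 1) * n) A"
    unfolding EPDF_def PDF_gen_def using common
  proof (intro conjI ballI)
    fix x assume "x \<in> (\<Union>i<n. A i)"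
    then have x: "x \<in> carrier G" "x \<notin> H" using UA by auto
    then have x1: "x \<noteq> \<one>" using oneH by auto
    have "{b \<in> ?U. x \<otimes> b \<in> ?U} = ?U - {b \<in> carrier G. x \<otimes> b \<in> H}" using x by auto
    moreover have "{b \<in> carrier G. x \<otimes> b \<in> H} \<subseteq> ?U"
    proof
      fix b assume b: "b \<in> {b \<in> carrier G. x \<otimes> b \<in> H}"
      have "b \<notin> H"
      proof
        assume "b \<in> H"
        then have "x \<otimes> b \<otimes> inv b \<in> H" using b subH subgroup.m_closed subgroup.m_inv_closed by (metis mem_Collect_eq)
        then show False using x b by (simp add: m_assoc)
      qed
      then show "b \<in> ?U" using b by auto
    qed
    ultimately have "card {b \<in> ?U. x \<otimes> b \<in> ?U} = card ?U - n"
      using card_Diff_subset[of "{b \<in> carrier G. x \<otimes> b \<in> H}" ?U] card_shift_set[OF subH x(1)] assms(1,4)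
      by (metis (no_types, lifting) finite_Diff finite_subset)
    then have "count (ExtD G n A) x + (m - 2) = m * n - n - n"
      using cntExt[OF x(1) x1] cntInt RG x lamn cardU by simp
    moreover obtain k where k: "m = k + 2" using m2 by (metis add.commute le_Suc_ex)
    moreover obtain l where l: "n = l + 1" using npos by (metis add.commute le_Suc_ex)
    ultimately show "count (ExtD G n A) x = (m - 2) * (n - 1)" by (simp add: algebra_simps)
  next
    fix x assume "x \<in> carrier G - (\<Union>i<n. A i) - {\<one>}"
    then have x: "x \<in> H" "x \<noteq> \<one>" using Hrest by auto
    have xc: "x \<in> carrier G" using x Hc by auto
    have "{b \<in> ?U. x \<otimes> b \<in> ?U} = ?U"
    proof (intro equalityI subsetI)
      fix b assume b: "b \<in> ?U"
      have "x \<otimes> b \<notin> H"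
      proof
        assume "x \<otimes> b \<in> H"
        then have "inv x \<otimes> (x \<otimes> b) \<in> H" using x subH subgroup.m_closed subgroup.m_inv_closed by metis
        then show False using b xc by (simp add: m_assoc[symmetric])
      qed
      then show "b \<in> {b \<in> ?U. x \<otimes> b \<in> ?U}" using b xc by auto
    qed auto
    then have "count (ExtD G n A) x + 0 = m * n - n"
      using cntExt[OF xc x(2)] cntInt RH x cardU by simp
    then show "count (ExtD G n A) x = (m - 1) * n" by (simp add: diff_mult_distrib)
  qed simp_all
  have "partitions_fam n A (carrier G - H)"
    unfolding partitions_fam_def using common UA by blast
  then show ?thesis using DP EP by blast
qed

theorem mainTheorem2:
  fixes G :: "('a, 'b) monoid_scheme" and H :: "'a set" and R :: "'a set"
    and m n lam :: nat
  assumes "group G" and "finite (carrier G)"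
    and "card (carrier G) = m * n"
    and "H \<lhd> G" and "card H = n"
    and "real lam = (real m - 2) / real n"
    and "RDS G H m n (m - 1) lam R"
  shows "\<exists>A :: nat \<Rightarrow> 'a set.
           partitions_fam n A (carrier G - H) \<and>
           DPDF G (m * n) n (m - 1) (m - 2) 0 A \<and>
           EPDF G (m * n) n (m - 1) ((m - 2) * (n - 1)) ((m - 1) * n) A"
  using group.main_aux[OF assms(1) assms(2-7)] .

end
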